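(* The greedy algorithm Degree (with $r=1$) is not an approximation algorithm for Minimum Congestion Dominating Set: for every real $c\ge 1$ there exist a graph $G$ and an execution of Degree on $G$ (i.e., a choice of tie-breaking) whose output $D$ satisfies $\overline{\mathrm{cong}}(D)>c\cdot\mathrm{mac}(G)$. In fact, for every $k\ge 2$, on the graph obtained from the complete bipartite graph $K_{k,k}$ with sides $A,B$ by attaching one pendant leaf to each vertex of $A\cup B$ (so $n=4k$), some execution outputs $D=A\cup B$ with $\overline{\mathrm{cong}}(D)=n/8+1$, while $\mathrm{mac}(G)=1$.
   Context: For $r=1$: a dominating set of $G=(V,E)$ is $D\subseteq V$ with $N[D]=V$ ($N[\cdot]$ closed neighborhood). The average congestion of $S$ is $\overline{\mathrm{cong}}(S)=\frac{1}{|V|}\sum_{x\in V}|N[x]\cap S|$ and $\mathrm{mac}(G)$ is its minimum over dominating sets. The algorithm Degree starts with $D=\emptyset$ and, while $N[D]\ne V$, adds to $D$ a vertex $v$ maximizing $|N[v]\setminus N[D]|$, breaking ties arbitrarily; it outputs $D$. *)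

theory Defs
  imports Complex_Main
begin

definition graph :: "'a set \<Rightarrow> ('a \<Rightarrow> 'a \<Rightarrow> bool) \<Rightarrow> bool" where
  "graph V E \<longleftrightarrow> finite V \<and> (\<forall>x y. E x y \<longrightarrow> x \<in> V \<and> y \<in> V)
     \<and> (\<forall>x y. E x y \<longrightarrow> E y x) \<and> (\<forall>x. \<not> E x x)"

definition cnbhd :: "'a set \<Rightarrow> ('a \<Rightarrow> 'a \<Rightarrow> bool) \<Rightarrow> 'a \<Rightarrow> 'a set" where
  "cnbhd V E x = {y \<in> V. y = x \<or> E x y}"

definition cnbhd_set :: "'a set \<Rightarrow> ('a \<Rightarrow> 'a \<Rightarrow> bool) \<Rightarrow> 'a set \<Rightarrow> 'a set" where
  "cnbhd_set V E S = (\<Union>x\<in>S. cnbhd V E x)"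

definition dominating :: "'a set \<Rightarrow> ('a \<Rightarrow> 'a \<Rightarrow> bool) \<Rightarrow> 'a set \<Rightarrow> bool" where
  "dominating V E D \<longleftrightarrow> D \<subseteq> V \<and> cnbhd_set V E D = V"

definition avg_cong :: "'a set \<Rightarrow> ('a \<Rightarrow> 'a \<Rightarrow> bool) \<Rightarrow> 'a set \<Rightarrow> real" where
  "avg_cong V E S = (\<Sum>x\<in>V. real (card (cnbhd V E x \<inter> S))) / real (card V)"

definition mac :: "'a set \<Rightarrow> ('a \<Rightarrow> 'a \<Rightarrow> bool) \<Rightarrow> real" where
  "mac V E = Min (avg_cong V E ` {D. dominating V E D})"

text \<open>Reachable states of the algorithm Degree (any tie-breaking).\<close>
inductive degree_run :: "'a set \<Rightarrow> ('a \<Rightarrow> 'a \<Rightarrow> bool) \<Rightarrow> 'a set \<Rightarrow> bool"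
  for V E where
  start: "degree_run V E {}"
| step: "\<lbrakk> degree_run V E D; cnbhd_set V E D \<noteq> V; v \<in> V;
           \<forall>u\<in>V. card (cnbhd V E u - cnbhd_set V E D) \<le> card (cnbhd V E v - cnbhd_set V E D) \<rbrakk>
         \<Longrightarrow> degree_run V E (insert v D)"

definition degree_output :: "'a set \<Rightarrow> ('a \<Rightarrow> 'a \<Rightarrow> bool) \<Rightarrow> 'a set \<Rightarrow> bool" where
  "degree_output V E D \<longleftrightarrow> degree_run V E D \<and> cnbhd_set V E D = V"

text \<open>K_{k,k} with a pendant leaf on every vertex. A = {(0,i)}, B = {(1,i)},
  leaf of (0,i) is (2,i), leaf of (1,i) is (3,i), i < k.\<close>
definition sideA :: "nat \<Rightarrow> (nat \<times> nat) set" where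
  "sideA k = {(0, i) | i. i < k}"
definition sideB :: "nat \<Rightarrow> (nat \<times> nat) set" where
  "sideB k = {(1, i) | i. i < k}"
definition pbip_V :: "nat \<Rightarrow> (nat \<times> nat) set" where
  "pbip_V k = {(t, i) | t i. t < 4 \<and> i < k}"
definition pbip_E :: "nat \<Rightarrow> nat \<times> nat \<Rightarrow> nat \<times> nat \<Rightarrow> bool" where
  "pbip_E k x y \<longleftrightarrow> snd x < k \<and> snd y < k \<and>
     ( (fst x = 0 \<and> fst y = 1) \<or> (fst x = 1 \<and> fst y = 0)
     \<or> ({fst x, fst y} = {0, 2} \<and> snd x = snd y)
     \<or> ({fst x, fst y} = {1, 3} \<and> snd x = snd y))"

end

theory Submission imports Defs begin


lemma run_subset: "degree_run V E D \<Longrightarrow> D \<subseteq> V"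
  by (induction rule: degree_run.induct) auto

lemma cnbhd_sub: "cnbhd V E x \<subseteq> V" by (auto simp: cnbhd_def)
lemma cnbhd_set_sub: "cnbhd_set V E S \<subseteq> V" by (auto simp: cnbhd_set_def cnbhd_def)

lemma dom_ge1:
  assumes g: "graph V E" and ne: "V \<noteq> {}" and d: "dominating V E D"
  shows "avg_cong V E D \<ge> 1"
proof -
  have fin: "finite V" using g by (simp add: graph_def)
  have "\<forall>x\<in>V. 1 \<le> real (card (cnbhd V E x \<inter> D))"
  proof
    fix x assume x: "x \<in> V"
    then have "x \<in> cnbhd_set V E D" using d by (simp add: dominating_def)
    then obtain y where y: "y \<in> D" "x \<in> cnbhd V E y" by (auto simp: cnbhd_set_def)
    then have "y \<in> cnbhd V E x" using g d x by (auto simp: cnbhd_def graph_def dominating_def)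
    then have "cnbhd V E x \<inter> D \<noteq> {}" using y by auto
    moreover have "finite (cnbhd V E x \<inter> D)" using fin cnbhd_sub[of V E x]
      by (meson finite_Int finite_subset)
    ultimately show "1 \<le> real (card (cnbhd V E x \<inter> D))"
      by (simp add: Suc_le_eq card_gt_0_iff)
  qed
  then have "(\<Sum>x\<in>V. 1) \<le> (\<Sum>x\<in>V. real (card (cnbhd V E x \<inter> D)))"
    by (intro sum_mono) auto
  moreover have "card V > 0" using fin ne by (simp add: card_gt_0_iff)
  ultimately show ?thesis by (simp add: avg_cong_def)
qed

lemma mac_le:
  assumes g: "graph V E" and d: "dominating V E D"
  shows "mac V E \<le> avg_cong V E D"
proof -
  have "{D. dominating V E D} \<subseteq> Pow V" by (auto simp: dominating_def)
  then have "finite {D. dominating V E D}" using g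
    by (meson finite_Pow_iff finite_subset graph_def)
  then show ?thesis unfolding mac_def using d by (intro Min_le) auto
qed

lemma mac_eq1:
  assumes g: "graph V E" and ne: "V \<noteq> {}" and d: "dominating V E D" and a: "avg_cong V E D = 1"
  shows "mac V E = 1"
proof -
  have "{D. dominating V E D} \<subseteq> Pow V" by (auto simp: dominating_def)
  then have "finite {D. dominating V E D}" using g
    by (meson finite_Pow_iff finite_subset graph_def)
  then show ?thesis unfolding mac_def
    using d a dom_ge1[OF g ne]
    apply (intro Min_eqI)
      apply simp
     apply force
    by (metis image_eqI mem_Collect_eq)
qed

locale tr =
  fixes V :: "'a set" and E and f :: "'a \<Rightarrow> 'b" and g
  assumes gf: "\<And>x. x \<in> V \<Longrightarrow> g (f x) = x" and gr: "graph V E"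
begin

definition "V' = f ` V"
definition "E' x y = (x \<in> V' \<and> y \<in> V' \<and> E (g x) (g y))"

lemma inj: "inj_on f V" by (metis gf inj_onI)

lemma graph': "graph V' E'"
  using gr unfolding graph_def E'_def V'_def
  by (auto simp: gf)

lemma cn: "x \<in> V \<Longrightarrow> cnbhd V' E' (f x) = f ` cnbhd V E x"
  unfolding cnbhd_def E'_def V'_def
  by (auto simp: gf image_iff)

lemma cns: "S \<subseteq> V \<Longrightarrow> cnbhd_set V' E' (f ` S) = f ` cnbhd_set V E S"
  unfolding cnbhd_set_def using cn by (auto simp: image_UN subset_iff)

lemma img_diff: "X \<subseteq> V \<Longrightarrow> Y \<subseteq> V \<Longrightarrow> f ` X - f ` Y = f ` (X - Y)"
  using inj by (auto simp: inj_on_def)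

lemma img_int: "X \<subseteq> V \<Longrightarrow> Y \<subseteq> V \<Longrightarrow> f ` X \<inter> f ` Y = f ` (X \<inter> Y)"
  using inj by (auto simp: inj_on_def) blast

lemma card_img: "X \<subseteq> V \<Longrightarrow> card (f ` X) = card X"
  using inj by (meson card_image inj_on_subset)

lemma run': "degree_run V E D \<Longrightarrow> degree_run V' E' (f ` D)"
proof (induction rule: degree_run.induct)
  case start
  then show ?case using degree_run.start by simp
next
  case (step D v)
  have DV: "D \<subseteq> V" using step(1) by (rule run_subset)
  have c: "cnbhd_set V' E' (f ` D) = f ` cnbhd_set V E D" using cns[OF DV] .
  have "cnbhd_set V' E' (f ` D) \<noteq> V'"
  proof
    assume "cnbhd_set V' E' (f ` D) = V'"
    then have "f ` cnbhd_set V E D = f ` V" using c V'_def by simp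
    then have "cnbhd_set V E D = V" using inj cnbhd_set_sub
      by (metis inj_on_image_eq_iff order_refl)
    then show False using step(2) by simp
  qed
  moreover have "f v \<in> V'" using step(3) V'_def by simp
  moreover have "\<forall>u\<in>V'. card (cnbhd V' E' u - cnbhd_set V' E' (f ` D))
        \<le> card (cnbhd V' E' (f v) - cnbhd_set V' E' (f ` D))"
  proof
    fix u assume "u \<in> V'"
    then obtain u0 where u0: "u0 \<in> V" "u = f u0" by (auto simp: V'_def)
    have e: "\<And>w. w \<in> V \<Longrightarrow> card (cnbhd V' E' (f w) - cnbhd_set V' E' (f ` D))
           = card (cnbhd V E w - cnbhd_set V E D)"
      by (simp add: c cn img_diff cnbhd_sub cnbhd_set_sub)
         (meson Diff_subset card_img cnbhd_sub order_trans)
    show "card (cnbhd V' E' u - cnbhd_set V' E' (f ` D))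
        \<le> card (cnbhd V' E' (f v) - cnbhd_set V' E' (f ` D))"
      using e[OF u0(1)] e[OF step(3)] step(4) u0 by simp
  qed
  ultimately show ?case using degree_run.step[OF step(5)] by simp
qed

lemma out': "degree_output V E D \<Longrightarrow> degree_output V' E' (f ` D)"
  unfolding degree_output_def using run' cns run_subset V'_def by metis

lemma dom': "dominating V E D \<Longrightarrow> dominating V' E' (f ` D)"
  unfolding dominating_def using cns V'_def by auto

lemma avg': assumes "S \<subseteq> V" shows "avg_cong V' E' (f ` S) = avg_cong V E S"
proof -
  have "(\<Sum>x\<in>V'. real (card (cnbhd V' E' x \<inter> f ` S))) = (\<Sum>x\<in>V. real (card (cnbhd V' E' (f x) \<inter> f ` S)))"
    unfolding V'_def using inj by (simp add: sum.reindex)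
  also have "\<dots> = (\<Sum>x\<in>V. real (card (cnbhd V E x \<inter> S)))"
    using assms by (intro sum.cong) (auto simp: cn img_int cnbhd_sub card_img le_infI1)
  finally show ?thesis unfolding avg_cong_def V'_def using card_img by simp
qed

end


lemma memV[simp]: "(t,i) \<in> pbip_V k \<longleftrightarrow> t < 4 \<and> i < k"
  by (auto simp: pbip_V_def)
lemma memA[simp]: "(t,i) \<in> sideA k \<longleftrightarrow> t = 0 \<and> i < k"
  by (auto simp: sideA_def)
lemma memB[simp]: "(t,i) \<in> sideB k \<longleftrightarrow> t = 1 \<and> i < k"
  by (auto simp: sideB_def)

lemma V_prod: "pbip_V k = {0..<4} \<times> {0..<k}" by auto
lemma AB_prod: "sideA k \<union> sideB k = {0..<2} \<times> {0..<k}" by auto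
lemma A_img: "sideA k = (\<lambda>i. (0,i)) ` {..<k}" by auto
lemma B_img: "sideB k = (\<lambda>i. (1,i)) ` {..<k}" by auto
lemma cardA: "card (sideA k) = k" by (simp add: A_img card_image inj_on_def)
lemma cardB: "card (sideB k) = k" by (simp add: B_img card_image inj_on_def)

lemma pE: "pbip_E k (a,b) (c,d) \<longleftrightarrow> b < k \<and> d < k \<and>
   ((a = 0 \<and> c = 1) \<or> (a = 1 \<and> c = 0) \<or> (a = 0 \<and> c = 2 \<and> b = d) \<or> (a = 2 \<and> c = 0 \<and> b = d)
    \<or> (a = 1 \<and> c = 3 \<and> b = d) \<or> (a = 3 \<and> c = 1 \<and> b = d))"
  unfolding pbip_E_def by (simp add: doubleton_eq_iff) arith

lemma graphP: "graph (pbip_V k) (pbip_E k)"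
  unfolding graph_def
proof (intro conjI allI impI)
  show "finite (pbip_V k)" by (simp add: V_prod)
  fix x y assume e: "pbip_E k x y"
  obtain a b c d where xy: "x = (a,b)" "y = (c,d)" by force
  show "x \<in> pbip_V k" using e xy by (auto simp: pE)
  show "y \<in> pbip_V k" using e xy by (auto simp: pE)
  show "pbip_E k y x" using e xy by (auto simp: pE)
next
  fix x :: "nat \<times> nat"
  obtain a b where "x = (a,b)" by force
  then show "\<not> pbip_E k x x" by (auto simp: pE)
qed

lemma cardV: "card (pbip_V k) = 4 * k" by (simp add: V_prod card_cartesian_product)

lemma memN: "(s,j) \<in> cnbhd (pbip_V k) (pbip_E k) (t,i) \<longleftrightarrow>
   s < 4 \<and> j < k \<and> ((s,j) = (t,i) \<or> (i < k \<and> ((t = 0 \<and> s = 1) \<or> (t = 1 \<and> s = 0)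
     \<or> ({t,s} = {0,2} \<and> i = j) \<or> ({t,s} = {1,3} \<and> i = j))))"
  by (auto simp: cnbhd_def pbip_E_def)

lemma N0: "i < k \<Longrightarrow> cnbhd (pbip_V k) (pbip_E k) (0,i) = insert (0,i) (insert (2,i) (sideB k))"
  by (auto simp: memN doubleton_eq_iff)
lemma N1: "i < k \<Longrightarrow> cnbhd (pbip_V k) (pbip_E k) (1,i) = insert (1,i) (insert (3,i) (sideA k))"
  by (auto simp: memN doubleton_eq_iff)
lemma N2: "i < k \<Longrightarrow> cnbhd (pbip_V k) (pbip_E k) (2,i) = {(2,i),(0,i)}"
  by (auto simp: memN doubleton_eq_iff)
lemma N3: "i < k \<Longrightarrow> cnbhd (pbip_V k) (pbip_E k) (3,i) = {(3,i),(1,i)}"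
  by (auto simp: memN doubleton_eq_iff)

lemma finA[simp]: "finite (sideA k)" by (simp add: A_img)
lemma finB[simp]: "finite (sideB k)" by (simp add: B_img)

lemma cardN0: "i < k \<Longrightarrow> card (cnbhd (pbip_V k) (pbip_E k) (0,i)) = k + 2"
  unfolding N0 by (simp add: cardB)
lemma cardN1: "i < k \<Longrightarrow> card (cnbhd (pbip_V k) (pbip_E k) (1,i)) = k + 2"
  unfolding N1 by (simp add: cardA)


lemma card2: "X \<subseteq> {a,b} \<Longrightarrow> card X \<le> 2"
  using card_mono[of "{a,b}" X] by (simp add: card_insert_if split: if_splits)

lemma cardN_le: "u \<in> pbip_V k \<Longrightarrow> card (cnbhd (pbip_V k) (pbip_E k) u) \<le> k + 2"
proof -
  assume u: "u \<in> pbip_V k"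
  obtain t i where ti: "u = (t,i)" by force
  have "t < 4" "i < k" using u ti by auto
  then have "t = 0 \<or> t = 1 \<or> t = 2 \<or> t = 3" by auto
  then show ?thesis
  proof (elim disjE)
    assume "t = 0" then show ?thesis using ti cardN0 \<open>i<k\<close> by simp
  next
    assume "t = 1" then show ?thesis using ti cardN1 \<open>i<k\<close> by simp
  next
    assume "t = 2" then show ?thesis using ti N2[OF \<open>i<k\<close>] card2[of _ "(2,i)" "(0,i)"] by simp
  next
    assume "t = 3" then show ?thesis using ti N3[OF \<open>i<k\<close>] card2[of _ "(3,i)" "(1,i)"] by simp
  qed
qed

lemma run1: "k \<ge> 1 \<Longrightarrow> degree_run (pbip_V k) (pbip_E k) {(0,0)}"
proof -
  assume k: "k \<ge> 1"
  have m: "(0,0) \<in> pbip_V k" using k by simp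
  have e: "cnbhd_set (pbip_V k) (pbip_E k) {} = {}" by (simp add: cnbhd_set_def)
  have ne: "cnbhd_set (pbip_V k) (pbip_E k) {} \<noteq> pbip_V k" unfolding e using m by blast
  have ge: "\<forall>u\<in>pbip_V k. card (cnbhd (pbip_V k) (pbip_E k) u - cnbhd_set (pbip_V k) (pbip_E k) {})
      \<le> card (cnbhd (pbip_V k) (pbip_E k) (0,0) - cnbhd_set (pbip_V k) (pbip_E k) {})"
    unfolding e using cardN_le cardN0[of 0 k] k by simp
  show ?thesis using degree_run.step[OF degree_run.start ne m ge] .
qed

lemma C1: "k \<ge> 1 \<Longrightarrow> cnbhd_set (pbip_V k) (pbip_E k) {(0,0)} = insert (0,0) (insert (2,0) (sideB k))"
  by (simp add: cnbhd_set_def N0)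

lemma gain1: "k \<ge> 1 \<Longrightarrow> i < k \<Longrightarrow>
   card (cnbhd (pbip_V k) (pbip_E k) (1,i) - cnbhd_set (pbip_V k) (pbip_E k) {(0,0)}) = k"
proof -
  assume k: "k \<ge> 1" and i: "i < k"
  have "cnbhd (pbip_V k) (pbip_E k) (1,i) - cnbhd_set (pbip_V k) (pbip_E k) {(0,0)}
      = insert (3,i) (sideA k - {(0,0)})"
    unfolding C1[OF k] N1[OF i] using i by auto
  moreover have "card (sideA k - {(0,0)}) = k - 1" using k by (simp add: cardA)
  ultimately show ?thesis using k by simp
qed

lemma run2: "k \<ge> 2 \<Longrightarrow> degree_run (pbip_V k) (pbip_E k) {(1,0),(0,0)}"
proof -
  assume k2: "k \<ge> 2"
  then have k: "k \<ge> 1" by simp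
  let ?C = "cnbhd_set (pbip_V k) (pbip_E k) {(0,0)}"
  have ne: "?C \<noteq> pbip_V k"
  proof
    assume "?C = pbip_V k"
    moreover have "(3,0) \<in> pbip_V k" using k by simp
    moreover have "(3::nat,0::nat) \<notin> insert (0,0) (insert (2,0) (sideB k))" by simp
    ultimately show False unfolding C1[OF k] by blast
  qed
  have "\<forall>u\<in>pbip_V k. card (cnbhd (pbip_V k) (pbip_E k) u - ?C) \<le> card (cnbhd (pbip_V k) (pbip_E k) (1,0) - ?C)"
  proof
    fix u assume u: "u \<in> pbip_V k"
    obtain t i where ti: "u = (t,i)" by force
    have "t < 4" "i < k" using u ti by auto
    then have "t = 0 \<or> t = 1 \<or> t = 2 \<or> t = 3" by auto
    then have "card (cnbhd (pbip_V k) (pbip_E k) u - ?C) \<le> k"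
    proof (elim disjE)
      assume t: "t = 0"
      have "cnbhd (pbip_V k) (pbip_E k) u - ?C \<subseteq> {(0,i),(2,i)}" using ti t N0[OF \<open>i<k\<close>] unfolding C1[OF k] by auto
      then show ?thesis using card2 k2 by (meson le_trans)
    next
      assume "t = 1" then show ?thesis using ti gain1[OF k \<open>i<k\<close>] by simp
    next
      assume t: "t = 2"
      have "cnbhd (pbip_V k) (pbip_E k) u - ?C \<subseteq> {(2,i),(0,i)}" using ti t N2[OF \<open>i<k\<close>] by auto
      then show ?thesis using card2 k2 by (meson le_trans)
    next
      assume t: "t = 3"
      have "cnbhd (pbip_V k) (pbip_E k) u - ?C \<subseteq> {(3,i),(1,i)}" using ti t N3[OF \<open>i<k\<close>] by auto
      then show ?thesis using card2 k2 by (meson le_trans)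
    qed
    then show "card (cnbhd (pbip_V k) (pbip_E k) u - ?C) \<le> card (cnbhd (pbip_V k) (pbip_E k) (1,0) - ?C)"
      using gain1[OF k, of 0] k by simp
  qed
  moreover have "(1,0) \<in> pbip_V k" using k by simp
  ultimately show ?thesis using degree_run.step[OF run1[OF k] ne] by blast
qed


abbreviation "D2 \<equiv> {(1::nat,0::nat),(0,0)}"

lemma cs_mem: "x \<in> cnbhd_set V E S \<longleftrightarrow> (\<exists>d\<in>S. x \<in> cnbhd V E d)"
  by (auto simp: cnbhd_set_def)

lemma AB_cov: "k \<ge> 1 \<Longrightarrow> D2 \<subseteq> D \<Longrightarrow> sideA k \<union> sideB k \<subseteq> cnbhd_set (pbip_V k) (pbip_E k) D"
proof
  fix y assume k: "k \<ge> 1" and D: "D2 \<subseteq> D" and y: "y \<in> sideA k \<union> sideB k"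
  obtain t i where ti: "y = (t,i)" by force
  show "y \<in> cnbhd_set (pbip_V k) (pbip_E k) D"
  proof (cases "t = 0")
    case True
    then have "y \<in> cnbhd (pbip_V k) (pbip_E k) (1,0)" using ti y k N1[of 0 k] by auto
    then show ?thesis using D cs_mem by fastforce
  next
    case False
    then have "y \<in> cnbhd (pbip_V k) (pbip_E k) (0,0)" using ti y k N0[of 0 k] by auto
    then show ?thesis using D cs_mem by fastforce
  qed
qed

lemma gain_le1:
  assumes k: "k \<ge> 1" and D: "D2 \<subseteq> D" and u: "(s,j) \<in> pbip_V k"
  shows "card (cnbhd (pbip_V k) (pbip_E k) (s,j) - cnbhd_set (pbip_V k) (pbip_E k) D) \<le> 1"
proof -
  have "cnbhd (pbip_V k) (pbip_E k) (s,j) - cnbhd_set (pbip_V k) (pbip_E k) D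
     \<subseteq> {(if s < 2 then s + 2 else s, j)}"
  proof
    fix y assume y: "y \<in> cnbhd (pbip_V k) (pbip_E k) (s,j) - cnbhd_set (pbip_V k) (pbip_E k) D"
    obtain r m where rm: "y = (r,m)" by force
    have "y \<notin> sideA k \<union> sideB k" using y AB_cov[OF k D] by blast
    then have "r \<ge> 2" using rm y by (auto simp: cnbhd_def)
    then show "y \<in> {(if s < 2 then s + 2 else s, j)}"
      using y rm u by (auto simp: memN doubleton_eq_iff)
  qed
  then show ?thesis using card_mono[of "{(if s < 2 then s + 2 else s, j)}"] by fastforce
qed

lemma run3: "finite S \<Longrightarrow> k \<ge> 2 \<Longrightarrow> S \<subseteq> (sideA k \<union> sideB k) - D2 \<Longrightarrow>
   degree_run (pbip_V k) (pbip_E k) (D2 \<union> S)"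
proof (induction S rule: finite_induct)
  case empty
  then show ?case using run2 by simp
next
  case (insert x F)
  have k: "k \<ge> 1" using insert by simp
  let ?D = "D2 \<union> F"
  let ?C = "cnbhd_set (pbip_V k) (pbip_E k) ?D"
  have run: "degree_run (pbip_V k) (pbip_E k) ?D" using insert by simp
  obtain t i where ti: "x = (t,i)" by force
  have x: "t < 2" "i < k" "i \<noteq> 0" "x \<notin> ?D" using insert ti by auto
  have lV: "(t+2,i) \<in> pbip_V k" using x by simp
  have lN: "(t+2,i) \<in> cnbhd (pbip_V k) (pbip_E k) x" using x ti by (auto simp: memN)
  have lC: "(t+2,i) \<notin> ?C"
  proof
    assume "(t+2,i) \<in> ?C"
    then obtain d where d: "d \<in> ?D" "(t+2,i) \<in> cnbhd (pbip_V k) (pbip_E k) d" using cs_mem by metis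
    have dAB: "d \<in> sideA k \<union> sideB k" using d(1) insert.prems k by auto
    obtain s j where sj: "d = (s,j)" by force
    have "d = x" using d(2) dAB sj ti x by (auto simp: memN doubleton_eq_iff)
    then show False using d(1) x(4) by simp
  qed
  have ne: "?C \<noteq> pbip_V k" using lV lC by blast
  have xV: "x \<in> pbip_V k" using x ti by simp
  have g1: "1 \<le> card (cnbhd (pbip_V k) (pbip_E k) x - ?C)"
  proof -
    have "finite (cnbhd (pbip_V k) (pbip_E k) x - ?C)"
      by (meson cnbhd_sub finite_Diff finite_subset graphP graph_def)
    moreover have "(t+2,i) \<in> cnbhd (pbip_V k) (pbip_E k) x - ?C" using lN lC by simp
    ultimately show ?thesis by (metis One_nat_def Suc_leI card_gt_0_iff empty_iff)
  qed
  have ge: "\<forall>u\<in>pbip_V k. card (cnbhd (pbip_V k) (pbip_E k) u - ?C) \<le> card (cnbhd (pbip_V k) (pbip_E k) x - ?C)"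
  proof
    fix u assume u: "u \<in> pbip_V k"
    obtain s j where sj: "u = (s,j)" by force
    show "card (cnbhd (pbip_V k) (pbip_E k) u - ?C) \<le> card (cnbhd (pbip_V k) (pbip_E k) x - ?C)"
      using gain_le1[OF k _, of ?D s j] u sj g1 by auto
  qed
  have "degree_run (pbip_V k) (pbip_E k) (insert x ?D)" using degree_run.step[OF run ne xV ge] .
  then show ?case by simp
qed

lemma outAB: "k \<ge> 2 \<Longrightarrow> degree_output (pbip_V k) (pbip_E k) (sideA k \<union> sideB k)"
proof -
  assume k2: "k \<ge> 2"
  then have k: "k \<ge> 1" by simp
  have fin: "finite (sideA k \<union> sideB k - D2)" by simp
  have eq: "D2 \<union> (sideA k \<union> sideB k - D2) = sideA k \<union> sideB k" using k by auto
  have r: "degree_run (pbip_V k) (pbip_E k) (sideA k \<union> sideB k)"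
    using run3[OF fin k2] eq by simp
  have "cnbhd_set (pbip_V k) (pbip_E k) (sideA k \<union> sideB k) = pbip_V k"
  proof
    show "cnbhd_set (pbip_V k) (pbip_E k) (sideA k \<union> sideB k) \<subseteq> pbip_V k" by (rule cnbhd_set_sub)
    show "pbip_V k \<subseteq> cnbhd_set (pbip_V k) (pbip_E k) (sideA k \<union> sideB k)"
    proof
      fix y assume y: "y \<in> pbip_V k"
      obtain t i where ti: "y = (t,i)" by force
      have "(if t < 2 then t else t - 2, i) \<in> sideA k \<union> sideB k" using y ti by auto
      moreover have "y \<in> cnbhd (pbip_V k) (pbip_E k) (if t < 2 then t else t - 2, i)"
        using y ti by (auto simp: memN doubleton_eq_iff)
      ultimately show "y \<in> cnbhd_set (pbip_V k) (pbip_E k) (sideA k \<union> sideB k)" using cs_mem by metis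
    qed
  qed
  then show ?thesis using r by (simp add: degree_output_def)
qed


definition Lv :: "nat \<Rightarrow> (nat \<times> nat) set" where "Lv k = {2..<4} \<times> {0..<k}"

lemma cAB: assumes x: "(t,i) \<in> pbip_V k"
  shows "card (cnbhd (pbip_V k) (pbip_E k) (t,i) \<inter> (sideA k \<union> sideB k)) = (if t < 2 then k+1 else 1)"
proof -
  have "t < 4" "i < k" using x by auto
  then have "t = 0 \<or> t = 1 \<or> t = 2 \<or> t = 3" by auto
  then show ?thesis
  proof (elim disjE)
    assume t: "t = 0"
    have "cnbhd (pbip_V k) (pbip_E k) (t,i) \<inter> (sideA k \<union> sideB k) = insert (0,i) (sideB k)"
      using N0[OF \<open>i<k\<close>] t \<open>i<k\<close> by auto
    then show ?thesis using t by (simp add: cardB)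
  next
    assume t: "t = 1"
    have "cnbhd (pbip_V k) (pbip_E k) (t,i) \<inter> (sideA k \<union> sideB k) = insert (1,i) (sideA k)"
      using N1[OF \<open>i<k\<close>] t \<open>i<k\<close> by auto
    then show ?thesis using t by (simp add: cardA)
  next
    assume t: "t = 2"
    have "cnbhd (pbip_V k) (pbip_E k) (t,i) \<inter> (sideA k \<union> sideB k) = {(0,i)}"
      using N2[OF \<open>i<k\<close>] t \<open>i<k\<close> by auto
    then show ?thesis using t by simp
  next
    assume t: "t = 3"
    have "cnbhd (pbip_V k) (pbip_E k) (t,i) \<inter> (sideA k \<union> sideB k) = {(1,i)}"
      using N3[OF \<open>i<k\<close>] t \<open>i<k\<close> by auto
    then show ?thesis using t by simp
  qed
qed

lemma cL: assumes x: "(t,i) \<in> pbip_V k"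
  shows "cnbhd (pbip_V k) (pbip_E k) (t,i) \<inter> Lv k = {(if t < 2 then t+2 else t, i)}"
  using x by (auto simp: memN Lv_def doubleton_eq_iff)

lemma avgAB: "k \<ge> 2 \<Longrightarrow> avg_cong (pbip_V k) (pbip_E k) (sideA k \<union> sideB k) = real (card (pbip_V k)) / 8 + 1"
proof -
  assume k: "k \<ge> 2"
  have V: "pbip_V k = (sideA k \<union> sideB k) \<union> Lv k" by (auto simp: Lv_def)
  have dj: "(sideA k \<union> sideB k) \<inter> Lv k = {}" by (auto simp: Lv_def)
  have s: "(\<Sum>x\<in>pbip_V k. real (card (cnbhd (pbip_V k) (pbip_E k) x \<inter> (sideA k \<union> sideB k))))
     = (\<Sum>x\<in>sideA k \<union> sideB k. real (k+1)) + (\<Sum>x\<in>Lv k. 1)"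
  proof -
    let ?F = "\<lambda>x. real (card (cnbhd (pbip_V k) (pbip_E k) x \<inter> (sideA k \<union> sideB k)))"
    have u: "sum ?F (sideA k \<union> sideB k \<union> Lv k) = sum ?F (sideA k \<union> sideB k) + sum ?F (Lv k)"
      by (rule sum.union_disjoint) (simp add: AB_prod, simp add: Lv_def, rule dj)
    have e1: "sum ?F (sideA k \<union> sideB k) = (\<Sum>x\<in>sideA k \<union> sideB k. real (k+1))"
    proof (rule sum.cong)
      fix x assume x: "x \<in> sideA k \<union> sideB k"
      have "x = (fst x, snd x)" by simp
      then show "?F x = real (k+1)" using x cAB[of "fst x" "snd x" k] by (auto simp: AB_prod)
    qed simp
    have e2x: "\<And>x. x \<in> Lv k \<Longrightarrow> ?F x = 1"
    proof -
      fix x assume x: "x \<in> Lv k"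
      have "x = (fst x, snd x)" by simp
      then show "?F x = 1" using x cAB[of "fst x" "snd x" k] by (auto simp: Lv_def)
    qed
    have e2: "sum ?F (Lv k) = (\<Sum>x\<in>Lv k. 1)" using e2x by (rule sum.cong[OF refl])
    show ?thesis using u e1 e2 V by simp
  qed
  have cab: "card (sideA k \<union> sideB k) = 2 * k" by (simp add: AB_prod card_cartesian_product)
  have cl: "card (Lv k) = 2 * k" by (simp add: Lv_def card_cartesian_product)
  have "avg_cong (pbip_V k) (pbip_E k) (sideA k \<union> sideB k) = (real (2*k) * (k+1) + real (2*k)) / real (4*k)"
    unfolding avg_cong_def s cardV using cab cl by simp
  also have "\<dots> = real (4*k) / 8 + 1" using k by (simp add: field_simps)
  finally show ?thesis using cardV by simp
qed

lemma domL: "dominating (pbip_V k) (pbip_E k) (Lv k)"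
  unfolding dominating_def
proof
  show "Lv k \<subseteq> pbip_V k" by (auto simp: Lv_def)
  show "cnbhd_set (pbip_V k) (pbip_E k) (Lv k) = pbip_V k"
  proof
    show "cnbhd_set (pbip_V k) (pbip_E k) (Lv k) \<subseteq> pbip_V k" by (rule cnbhd_set_sub)
    show "pbip_V k \<subseteq> cnbhd_set (pbip_V k) (pbip_E k) (Lv k)"
    proof
      fix y assume y: "y \<in> pbip_V k"
      obtain t i where ti: "y = (t,i)" by force
      have "(if t < 2 then t+2 else t, i) \<in> Lv k" using y ti by (auto simp: Lv_def)
      moreover have "y \<in> cnbhd (pbip_V k) (pbip_E k) (if t < 2 then t+2 else t, i)"
        using y ti by (auto simp: memN doubleton_eq_iff)
      ultimately show "y \<in> cnbhd_set (pbip_V k) (pbip_E k) (Lv k)" using cs_mem by metis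
    qed
  qed
qed

lemma avgL: "k \<ge> 1 \<Longrightarrow> avg_cong (pbip_V k) (pbip_E k) (Lv k) = 1"
proof -
  assume k: "k \<ge> 1"
  have "(\<Sum>x\<in>pbip_V k. real (card (cnbhd (pbip_V k) (pbip_E k) x \<inter> Lv k))) = (\<Sum>x\<in>pbip_V k. 1)"
    using cL by (intro sum.cong) force+
  then show ?thesis unfolding avg_cong_def using cardV[of k] k by simp
qed

lemma macP: "k \<ge> 1 \<Longrightarrow> mac (pbip_V k) (pbip_E k) = 1"
proof -
  assume k: "k \<ge> 1"
  have "pbip_V k \<noteq> {}" using k cardV[of k] by auto
  then show ?thesis using mac_eq1[OF graphP _ domL avgL[OF k]] by simp
qed


lemma part1: assumes c: "c \<ge> (1::real)"
  shows "\<exists>(V :: nat set) E D. graph V E \<and> degree_output V E D \<and> avg_cong V E D > c * mac V E"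
proof -
  define k where "k = nat \<lceil>2*c\<rceil> + 2"
  have k2: "k \<ge> 2" by (simp add: k_def)
  have kc: "real k \<ge> 2*c + 2" unfolding k_def using c by linarith
  interpret T: tr "pbip_V k" "pbip_E k" "\<lambda>(t,i). 4*i+t" "\<lambda>n. (n mod 4, n div 4)"
    by unfold_locales (auto simp: graphP)
  let ?f = "\<lambda>(t::nat,i::nat). 4*i+t"
  have o: "degree_output T.V' T.E' (?f ` (sideA k \<union> sideB k))" using T.out' outAB[OF k2] by blast
  have a: "avg_cong T.V' T.E' (?f ` (sideA k \<union> sideB k)) = real k / 2 + 1"
  proof -
    have "sideA k \<union> sideB k \<subseteq> pbip_V k" by auto
    then show ?thesis using T.avg'[of "sideA k \<union> sideB k"] avgAB[OF k2] cardV[of k] by simp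
  qed
  have m: "mac T.V' T.E' \<le> 1"
    using mac_le[OF T.graph' T.dom'[OF domL]] T.avg'[of "Lv k"] avgL[of k] k2
    by (simp add: Lv_def subset_iff)
  have "c * mac T.V' T.E' \<le> c" using m c by (simp add: mult_left_le)
  also have "c < real k / 2 + 1" using kc by linarith
  finally have lt: "c * mac T.V' T.E' < avg_cong T.V' T.E' (?f ` (sideA k \<union> sideB k))" using a by simp
  show ?thesis using T.graph' o lt by blast
qed

theorem mainTheorem7:
  shows "(\<forall>c::real. c \<ge> 1 \<longrightarrow>
            (\<exists>(V :: nat set) E D. graph V E \<and> degree_output V E D \<and> avg_cong V E D > c * mac V E))
       \<and> (\<forall>k::nat. k \<ge> 2 \<longrightarrow>
            graph (pbip_V k) (pbip_E k) \<and> card (pbip_V k) = 4 * k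
          \<and> degree_output (pbip_V k) (pbip_E k) (sideA k \<union> sideB k)
          \<and> avg_cong (pbip_V k) (pbip_E k) (sideA k \<union> sideB k) = real (card (pbip_V k)) / 8 + 1
          \<and> mac (pbip_V k) (pbip_E k) = 1)"
proof (intro conjI allI impI)
  fix c :: real assume "c \<ge> 1" then show "\<exists>(V :: nat set) E D. graph V E \<and> degree_output V E D \<and> avg_cong V E D > c * mac V E"
    by (rule part1)
next
  fix k :: nat assume k: "k \<ge> 2"
  show "graph (pbip_V k) (pbip_E k)" by (rule graphP)
  show "card (pbip_V k) = 4 * k" by (rule cardV)
  show "degree_output (pbip_V k) (pbip_E k) (sideA k \<union> sideB k)" using k by (rule outAB)
  show "avg_cong (pbip_V k) (pbip_E k) (sideA k \<union> sideB k) = real (card (pbip_V k)) / 8 + 1" using k by (rule avgAB)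
  show "mac (pbip_V k) (pbip_E k) = 1" using k by (intro macP) simp
qed

end
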